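(* Assume $\lfloor (M_1+\dots+M_n)/p\rfloor=n-1$ (ample reduction). For every $x=(x_1,\dots,x_n)\in\mathbb{F}_p^n$ with pairwise distinct coordinates and every $w\in\{c\in\mathbb{F}_p^n:\ \sum_im_ic_i=0\}$ there exists a unique $(c_1,\dots,c_{n-1})\in\mathbb{F}_p^{n-1}$ with $w=\sum_{l=1}^{n-1}c_lI^{[l]}(x)$.
   Context: $p,q$ are primes, $n$ a positive integer with $p>n\ge2$, $p>q$; $m_1,\dots,m_n$ are positive integers $<q$; $M_i$ is the least positive integer with $M_i\equiv -m_iq^{-1}\pmod p$. With $\Phi_p(x,z)=\prod_i(x-z_i)^{M_i}$ (here in an auxiliary variable, say $t$: $\Phi_p(t,z)=\prod_i(t-z_i)^{M_i}$), $I^{[l]}(z)\in\mathbb{F}_p[z_1,\dots,z_n]^n$ is the coefficient of $t^{lp-1}$ in $(\Phi_p/(t-z_1),\dots,\Phi_p/(t-z_n))$, and $I^{[l]}(x)$ denotes its value at $z=x$. *)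

theory Defs
  imports "Berlekamp_Zassenhaus.Finite_Field" "HOL-Computational_Algebra.Polynomial"
    "HOL-Library.FuncSet"
begin

definition bigM :: "'p::prime_card itself \<Rightarrow> nat \<Rightarrow> nat \<Rightarrow> nat" where
  "bigM _ q mi = (LEAST M::nat. 0 < M \<and>
      (of_nat M :: 'p mod_ring) = - of_nat mi * inverse (of_nat q))"

definition Phi :: "nat \<Rightarrow> (nat \<Rightarrow> nat) \<Rightarrow> (nat \<Rightarrow> 'p::prime_card mod_ring) \<Rightarrow> 'p mod_ring poly" where
  "Phi n M x = (\<Prod>i\<in>{1..n}. [:- x i, 1:] ^ M i)"

definition Ivec :: "nat \<Rightarrow> (nat \<Rightarrow> nat) \<Rightarrow> nat \<Rightarrow> (nat \<Rightarrow> 'p::prime_card mod_ring) \<Rightarrow> nat \<Rightarrow> 'p mod_ring" where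
  "Ivec n M l x i = coeff (Phi n M x div [:- x i, 1:]) (l * CARD('p) - 1)"

end

theory Submission
  imports Defs
begin

lemma of_nat_mod_ring_eq0_iff:
  "(of_nat k :: 'p::prime_card mod_ring) = 0 \<longleftrightarrow> CARD('p) dvd k"
  using of_nat_0_mod_ring_dvd[of k] 
  by (auto elim!: dvdE simp: of_nat_mult)

lemma antideriv:
  fixes G :: "'p::prime_card mod_ring poly"
  assumes "\<And>k. CARD('p) dvd Suc k \<Longrightarrow> coeff G k = 0"
  shows "\<exists>F. pderiv F = G \<and> degree F \<le> Suc (degree G)"
proof -
  define F where "F = Poly (0 # map (\<lambda>k. coeff G k / of_nat (Suc k)) [0..<Suc (degree G)])"
  have cF: "coeff F (Suc k) = coeff G k / of_nat (Suc k)" for k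
  proof (cases "k \<le> degree G")
    case True
    then show ?thesis unfolding F_def by (simp add: nth_default_def del: upt_Suc)
  next
    case False
    then show ?thesis unfolding F_def by (simp add: nth_default_def coeff_eq_0 del: upt_Suc)
  qed
  have "pderiv F = G"
  proof (rule poly_eqI)
    fix k
    show "coeff (pderiv F) k = coeff G k"
    proof (cases "(of_nat (Suc k) :: 'p mod_ring) = 0")
      case True
      then have "CARD('p) dvd Suc k" using of_nat_mod_ring_eq0_iff by blast
      then show ?thesis using assms True by (simp add: coeff_pderiv cF)
    next
      case False
      then show ?thesis by (simp add: coeff_pderiv cF)
    qed
  qed
  moreover have "degree F \<le> Suc (degree G)"
  proof (rule degree_le, intro allI impI)
    fix i assume "Suc (degree G) < i"
    then obtain k where "i = Suc k" "degree G < k" by (cases i) auto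
    then show "coeff F i = 0" by (simp add: cF coeff_eq_0)
  qed
  ultimately show ?thesis by blast
qed

lemma local_root:
  fixes F :: "'p::prime_card mod_ring poly"
  assumes "a < CARD('p)" "poly F x = 0" "[:-x,1:]^a dvd pderiv F"
  shows "[:-x,1:]^(Suc a) dvd F"
proof -
  let ?L = "[:-x,1:] :: 'p mod_ring poly"
  have "k \<le> Suc a \<Longrightarrow> ?L^k dvd F" for k
  proof (induction k)
    case 0 then show ?case by simp
  next
    case (Suc k)
    then obtain H where H: "F = ?L^k * H" by (auto elim!: dvdE)
    show ?case
    proof (cases k)
      case 0
      then show ?thesis using assms(2) by (simp add: poly_eq_0_iff_dvd)
    next
      case (Suc k')
      have dL: "pderiv ?L = 1" by (simp add: pderiv_pCons)
      have dLk: "pderiv (?L^k) = smult (of_nat k) (?L^k')"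
        unfolding Suc pderiv_power_Suc dL by simp
      have "pderiv F = ?L^k * pderiv H + H * (smult (of_nat k) (?L^k'))"
        unfolding H pderiv_mult dLk by simp
      moreover have "?L^k dvd pderiv F"
        using assms(3) Suc.prems by (meson Suc_le_mono dvd_trans le_imp_power_dvd)
      ultimately have "?L^k dvd H * (smult (of_nat k) (?L^k'))"
        by (metis dvd_add_right_iff dvd_triv_left)
      moreover have e1: "?L^k = ?L^k' * ?L" using Suc by (simp only: power_Suc2)
      moreover have e2: "H * smult (of_nat k) (?L^k') = ?L^k' * smult (of_nat k) H"
        by (metis mult.commute mult_smult_left mult_smult_right)
      ultimately have "?L^k' * ?L dvd ?L^k' * smult (of_nat k) H"
        by metis
      moreover have "?L^k' \<noteq> 0" by (rule power_not_zero) simp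
      ultimately have "?L dvd smult (of_nat k) H" using dvd_mult_cancel_left by blast
      moreover have "(of_nat k :: 'p mod_ring) \<noteq> 0"
        using Suc Suc.prems assms(1) of_nat_mod_ring_eq0_iff[of k]
        by (auto dest: dvd_imp_le)
      ultimately have "?L dvd H" using dvd_smult_cancel by blast
      then show ?thesis unfolding H power_Suc2 by (intro mult_dvd_mono dvd_refl)
    qed
  qed
  then show ?thesis by blast
qed

lemma pderiv_power_card: "pderiv ((K :: 'p::prime_card mod_ring poly) ^ CARD('p)) = 0"
proof -
  have "CARD('p) = Suc (CARD('p) - 1)" using prime_card[where 'a='p] prime_gt_0_nat by auto
  then show ?thesis by (metis of_nat_card_eq_0 pderiv_power_Suc smult_0_left mult_zero_left)
qed

lemma poly_power_card: "poly ((K :: 'p::prime_card mod_ring poly) ^ CARD('p)) a = poly K a"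
  using finite_field_power_card_eq_same[of "poly K a"] by (simp add: poly_power)

lemma prod_dvd_coprime:
  fixes f :: "nat \<Rightarrow> 'p::prime_card mod_ring poly"
  assumes "finite S" "\<And>j. j \<in> S \<Longrightarrow> f j dvd F"
    "\<And>i j. i \<in> S \<Longrightarrow> j \<in> S \<Longrightarrow> i \<noteq> j \<Longrightarrow> coprime (f i) (f j)"
  shows "prod f S dvd F"
  using assms
proof (induction S rule: finite_induct)
  case empty then show ?case by simp
next
  case (insert a S)
  have "coprime (f a) (prod f S)"
    using insert by (intro prod_coprime_right) (metis insert_iff)
  then show ?case using insert by (simp add: divides_mult)
qed

lemma coprime_linear:
  fixes a b :: "'a::field"
  assumes "a \<noteq> b"
  shows "coprime [:-a,1:] [:-b,1:]"
proof (rule coprimeI)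
  fix d assume "d dvd [:-a,1:]" "d dvd [:-b,1:]"
  then have "d dvd [:-a,1:] - [:-b,1:]" by (rule dvd_diff)
  then have "d dvd [:b - a:]" by simp
  moreover have "is_unit [:b - a:]" using assms by (simp add: is_unit_const_poly_iff)
  ultimately show "is_unit d" using dvd_unit_imp_unit by blast
qed


context
  fixes n :: nat and M :: "nat \<Rightarrow> nat" and x :: "nat \<Rightarrow> 'p::prime_card mod_ring"
  assumes inj: "inj_on x {1..n}"
    and Mb: "\<And>i. i \<in> {1..n} \<Longrightarrow> 0 < M i \<and> M i < CARD('p)"
    and amp: "(\<Sum>i\<in>{1..n}. M i) div CARD('p) = n - 1"
    and n1: "1 \<le> n"
begin

definition Pp :: "nat \<Rightarrow> 'p mod_ring poly" where
  "Pp i = (\<Prod>j\<in>{1..n}-{i}. [:-x j,1:])"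
definition Rr :: "'p mod_ring poly" where
  "Rr = (\<Prod>j\<in>{1..n}. [:-x j,1:]^(M j - 1))"
definition h0 :: "'p mod_ring poly" where
  "h0 = (\<Sum>i\<in>{1..n}. smult (of_nat (M i)) (Pp i))"

lemma RrPp: 
  assumes i: "i \<in> {1..n}"
  shows "Rr * Pp i = [:-x i,1:]^(M i - 1) * (\<Prod>j\<in>{1..n}-{i}. [:-x j,1:]^M j)"
proof -
  let ?S = "{1..n}-{i}"
  have "Rr = [:-x i,1:]^(M i - 1) * (\<Prod>j\<in>?S. [:-x j,1:]^(M j - 1))"
    unfolding Rr_def using i by (simp add: prod.remove)
  moreover have "(\<Prod>j\<in>?S. [:-x j,1:]^(M j - 1)) * Pp i = (\<Prod>j\<in>?S. [:-x j,1:]^M j)"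
    unfolding Pp_def prod.distrib[symmetric]
  proof (rule prod.cong)
    fix j assume "j \<in> ?S"
    then have "M j = Suc (M j - 1)" using Mb by force
    then show "[:-x j,1:]^(M j - 1) * [:-x j,1:] = [:-x j,1:]^M j"
      by (metis power_Suc2)
  qed simp
  ultimately show ?thesis by (simp add: mult.assoc)
qed

lemma Phi_split:
  assumes i: "i \<in> {1..n}"
  shows "Phi n M x = [:-x i,1:] * (Rr * Pp i)"
proof -
  have "M i = Suc (M i - 1)" using Mb i by force
  then have e: "[:-x i,1:]^M i = [:-x i,1:] * [:-x i,1:]^(M i - 1)" by (metis power_Suc)
  have "Phi n M x = [:-x i,1:]^M i * (\<Prod>j\<in>{1..n}-{i}. [:-x j,1:]^M j)"
    unfolding Phi_def using i by (simp add: prod.remove)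
  also have "\<dots> = [:-x i,1:] * ([:-x i,1:]^(M i - 1) * (\<Prod>j\<in>{1..n}-{i}. [:-x j,1:]^M j))"
    unfolding e by (rule mult.assoc)
  finally show ?thesis unfolding RrPp[OF i] .
qed

lemma Ivec_eq:
  assumes i: "i \<in> {1..n}"
  shows "Ivec n M l x i = coeff (Rr * Pp i) (l * CARD('p) - 1)"
proof -
  have L: "[:-x i,1:] \<noteq> 0" by simp
  show ?thesis unfolding Ivec_def Phi_split[OF i] nonzero_mult_div_cancel_left[OF L] ..
qed

lemma pderiv_Phi: "pderiv (Phi n M x) = Rr * h0"
proof -
  have "pderiv (Phi n M x) = (\<Sum>a\<in>{1..n}. (\<Prod>j\<in>{1..n}-{a}. [:-x j,1:]^M j) * pderiv ([:-x a,1:]^M a))"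
    unfolding Phi_def by (rule pderiv_prod)
  also have "\<dots> = (\<Sum>a\<in>{1..n}. Rr * smult (of_nat (M a)) (Pp a))"
  proof (rule sum.cong)
    fix a assume a: "a \<in> {1..n}"
    have Me: "Suc (M a - 1) = M a" using Mb a by force
    have dL: "pderiv [:-x a,1:] = 1" by (simp add: pderiv_pCons)
    have "pderiv ([:-x a,1:]^Suc (M a - 1)) = smult (of_nat (Suc (M a - 1))) ([:-x a,1:]^(M a - 1))"
      unfolding pderiv_power_Suc dL by simp
    then have "pderiv ([:-x a,1:]^M a) = smult (of_nat (M a)) ([:-x a,1:]^(M a - 1))"
      unfolding Me .
    then show "(\<Prod>j\<in>{1..n}-{a}. [:-x j,1:]^M j) * pderiv ([:-x a,1:]^M a) = Rr * smult (of_nat (M a)) (Pp a)"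
      using RrPp[OF a] by (simp add: mult_ac)
  qed simp
  finally show ?thesis unfolding h0_def by (simp add: sum_distrib_left)
qed

lemma Pp_other:
  assumes "i \<in> {1..n}" "j \<in> {1..n}" "j \<noteq> i"
  shows "poly (Pp i) (x j) = 0"
proof -
  have j: "j \<in> {1..n}-{i}" using assms by simp
  have "(\<Prod>k\<in>{1..n}-{i}. poly [:-x k,1:] (x j)) = 0"
    by (rule prod_zero) (use j in \<open>auto intro!: bexI[of _ j]\<close>)
  then show ?thesis unfolding Pp_def poly_prod .
qed

lemma Pp_self:
  assumes i: "i \<in> {1..n}"
  shows "poly (Pp i) (x i) \<noteq> 0"
proof -
  have "poly [:-x k,1:] (x i) \<noteq> 0" if k: "k \<in> {1..n}-{i}" for k
  proof -
    have "x i \<noteq> x k" using k i inj_onD[OF inj, of i k] by blast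
    then show ?thesis by simp
  qed
  then have "(\<Prod>k\<in>{1..n}-{i}. poly [:-x k,1:] (x i)) \<noteq> 0"
    by (subst prod_zero_iff) auto
  then show ?thesis unfolding Pp_def poly_prod .
qed

lemma deg_Pp: assumes i: "i \<in> {1..n}" shows "degree (Pp i) \<le> n - 1"
proof -
  have "degree (Pp i) \<le> (\<Sum>j\<in>{1..n}-{i}. degree [:-x j,(1::'p mod_ring):])"
    unfolding Pp_def by (rule degree_prod_sum_le[unfolded o_def]) simp
  also have "\<dots> = card ({1..n}-{i})" by simp
  also have "\<dots> \<le> n - 1" using i by auto
  finally show ?thesis .
qed

lemma Rr_nz: "Rr \<noteq> 0"
  unfolding Rr_def by simp


abbreviation "DD \<equiv> (\<Sum>i\<in>{1..n}. M i)"

lemma deg_Phi: "degree (Phi n M x) = DD"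
  unfolding Phi_def by (subst degree_prod_sum_eq) (auto simp: degree_linear_power)

lemma Phi_nz: "Phi n M x \<noteq> 0"
  unfolding Phi_def by simp

lemma deg_Rr: "degree Rr + n = DD"
proof -
  have "degree Rr = (\<Sum>i\<in>{1..n}. M i - 1)"
    unfolding Rr_def by (subst degree_prod_sum_eq) (auto simp: degree_linear_power)
  moreover have "(\<Sum>i\<in>{1..n}. M i - 1) + (\<Sum>i\<in>{1..n}. 1) = DD"
    unfolding sum.distrib[symmetric] using Mb by (intro sum.cong) auto
  ultimately show ?thesis by simp
qed

lemma DD_bounds: "DD < n * CARD('p)" "(n - 1) * CARD('p) \<le> DD"
proof -
  have p0: "0 < CARD('p)" by simp
  have e: "DD = (n - 1) * CARD('p) + DD mod CARD('p)"
    by (metis amp div_mult_mod_eq)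
  have "DD mod CARD('p) < CARD('p)" using p0 by simp
  moreover have "n * CARD('p) = (n - 1) * CARD('p) + CARD('p)" using n1 by (cases n) auto
  ultimately show "DD < n * CARD('p)" using e by linarith
  show "(n - 1) * CARD('p) \<le> DD" using e by linarith
qed

lemma kernel:
  assumes dh: "degree h \<le> n - 1"
    and hz: "\<And>l. l \<in> {1..n-1} \<Longrightarrow> coeff (Rr * h) (l * CARD('p) - 1) = 0"
  shows "\<exists>c. h = smult c h0"
proof -
  let ?p = "CARD('p)"
  define G where "G = Rr * h"
  have dG: "degree G \<le> DD - 1"
    unfolding G_def using degree_mult_le[of Rr h] dh deg_Rr n1 by linarith
  have cG: "coeff G k = 0" if "?p dvd Suc k" for k
  proof -
    from that obtain l where "Suc k = ?p * l" by (elim dvdE)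
    then have l: "Suc k = l * ?p" by (simp add: mult.commute)
    then have l1: "1 \<le> l" by (cases l) auto
    have kl: "k = l * ?p - 1" using l by simp
    show ?thesis
    proof (cases "l \<le> n - 1")
      case True
      then show ?thesis using hz[of l] l1 kl unfolding G_def by auto
    next
      case False
      then have "n \<le> l" by simp
      then have "n * ?p \<le> l * ?p" by simp
      then have "DD - 1 < k" using DD_bounds(1) l deg_Rr n1 by linarith
      then show ?thesis using dG by (simp add: coeff_eq_0)
    qed
  qed
  obtain F where F: "pderiv F = G" "degree F \<le> Suc (degree G)"
    using antideriv[of G] cG by blast
  define K where "K = (\<Sum>j\<in>{1..n}. smult (poly F (x j) / poly (Pp j) (x j)) (Pp j))"
  have Kx: "poly K (x i) = poly F (x i)" if i: "i \<in> {1..n}" for i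
  proof -
    have "poly K (x i) = (\<Sum>j\<in>{1..n}. if j = i then poly F (x i) else 0)"
      unfolding K_def poly_sum
    proof (rule sum.cong)
      fix j assume j: "j \<in> {1..n}"
      show "poly (smult (poly F (x j) / poly (Pp j) (x j)) (Pp j)) (x i) = (if j = i then poly F (x i) else 0)"
        using Pp_other[OF j i] Pp_self[OF j] by auto
    qed simp
    also have "\<dots> = poly F (x i)" using i by simp
    finally show ?thesis .
  qed
  have dK: "degree K \<le> n - 1"
    unfolding K_def
  proof (rule degree_sum_le)
    fix j assume j: "j \<in> {1..n}"
    show "degree (smult (poly F (x j) / poly (Pp j) (x j)) (Pp j)) \<le> n - 1"
      by (rule order.trans[OF degree_smult_le deg_Pp[OF j]])
  qed simp
  define Ft where "Ft = F - K ^ ?p"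
  have dFt': "pderiv Ft = G" unfolding Ft_def pderiv_diff pderiv_power_card F by simp
  have Ftx: "poly Ft (x i) = 0" if "i \<in> {1..n}" for i
    unfolding Ft_def poly_diff poly_power_card Kx[OF that] by simp
  have dFt: "degree Ft \<le> DD"
    unfolding Ft_def
  proof (rule degree_diff_le)
    show "degree F \<le> DD" using F(2) dG deg_Rr n1 by linarith
    have "degree (K ^ ?p) \<le> degree K * ?p" by (rule degree_power_le)
    also have "\<dots> \<le> (n - 1) * ?p" using dK by simp
    also have "\<dots> \<le> DD" by (rule DD_bounds(2))
    finally show "degree (K ^ ?p) \<le> DD" .
  qed
  have "Phi n M x dvd Ft"
    unfolding Phi_def
  proof (rule prod_dvd_coprime)
    fix j assume j: "j \<in> {1..n}"
    have "[:-x j,1:]^(M j - 1) dvd Rr" unfolding Rr_def by (rule dvd_prodI[OF _ j]) simp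
    then have d1: "[:-x j,1:]^(M j - 1) dvd pderiv Ft" unfolding dFt' G_def by (rule dvd_mult2)
    have lt: "M j - 1 < ?p" using Mb[OF j] by linarith
    have d2: "[:-x j,1:]^Suc (M j - 1) dvd Ft" by (rule local_root[OF lt Ftx[OF j] d1])
    have Me: "M j = Suc (M j - 1)" using Mb[OF j] by linarith
    show "[:-x j,1:]^M j dvd Ft" by (subst Me) (rule d2)
  next
    fix i j assume "i \<in> {1..n}" "j \<in> {1..n}" "i \<noteq> j"
    then have "x i \<noteq> x j" using inj_onD[OF inj, of i j] by blast
    then show "coprime ([:-x i,1:]^M i) ([:-x j,1:]^M j)"
      by (intro coprime_power_left_iff[THEN iffD2] disjI1 coprime_power_right_iff[THEN iffD2] coprime_linear)
  qed simp
  then obtain Z where Z: "Ft = Phi n M x * Z" by (elim dvdE)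
  have "Ft = smult (coeff Z 0) (Phi n M x)"
  proof (cases "Z = 0")
    case True then show ?thesis using Z by simp
  next
    case False
    have "degree Ft = DD + degree Z" unfolding Z degree_mult_eq[OF Phi_nz False] deg_Phi ..
    then have "degree Z = 0" using dFt by linarith
    then have "[:coeff Z 0:] = Z" by (rule degree_0_id)
    then have "Ft = Phi n M x * [:coeff Z 0:]" using Z by metis
    then show ?thesis by simp
  qed
  then have "pderiv Ft = smult (coeff Z 0) (pderiv (Phi n M x))"
    by (simp add: pderiv_smult)
  then have "G = smult (coeff Z 0) (Rr * h0)"
    unfolding dFt' pderiv_Phi .
  then have "Rr * h = Rr * smult (coeff Z 0) h0" unfolding G_def by (simp only: mult_smult_right)
  then have "h = smult (coeff Z 0) h0" using Rr_nz mult_left_cancel by blast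
  then show ?thesis by blast
qed


lemma poly_comb:
  assumes S: "S \<subseteq> {1..n}" and i: "i \<in> {1..n}"
  shows "poly (\<Sum>j\<in>S. smult (e j) (Pp j)) (x i) = (if i \<in> S then e i * poly (Pp i) (x i) else 0)"
proof -
  have "poly (\<Sum>j\<in>S. smult (e j) (Pp j)) (x i) = (\<Sum>j\<in>S. if j = i then e i * poly (Pp i) (x i) else 0)"
    unfolding poly_sum
  proof (rule sum.cong)
    fix j assume j: "j \<in> S"
    then have j': "j \<in> {1..n}" using S by blast
    show "poly (smult (e j) (Pp j)) (x i) = (if j = i then e i * poly (Pp i) (x i) else 0)"
      using Pp_other[OF j' i] by auto
  qed simp
  also have "\<dots> = (if i \<in> S then e i * poly (Pp i) (x i) else 0)"
    using S finite_subset[OF S] by (simp add: sum.delta')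
  finally show ?thesis .
qed

lemma coeff_comb:
  "coeff (Rr * (\<Sum>j\<in>S. smult (e j) (Pp j))) k = (\<Sum>j\<in>S. e j * coeff (Rr * Pp j) k)"
  by (simp add: sum_distrib_left coeff_sum mult_smult_right)

lemma inj0:
  assumes hd: "\<And>l. l \<in> {1..n-1} \<Longrightarrow> (\<Sum>i\<in>{1..n-1}. d i * coeff (Rr * Pp i) (l * CARD('p) - 1)) = 0"
    and i: "i \<in> {1..n-1}"
  shows "d i = 0"
proof -
  define h where "h = (\<Sum>j\<in>{1..n-1}. smult (d j) (Pp j))"
  have dh: "degree h \<le> n - 1" unfolding h_def
  proof (rule degree_sum_le)
    fix j assume j: "j \<in> {1..n-1}"
    then have j': "j \<in> {1..n}" by auto
    show "degree (smult (d j) (Pp j)) \<le> n - 1"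
      by (rule order.trans[OF degree_smult_le deg_Pp[OF j']])
  qed simp
  have "\<exists>c. h = smult c h0"
  proof (rule kernel[OF dh])
    fix l assume "l \<in> {1..n-1}"
    then show "coeff (Rr * h) (l * CARD('p) - 1) = 0" unfolding h_def coeff_comb using hd by simp
  qed
  then obtain c where c: "h = smult c h0" by blast
  have sub: "{1..n-1} \<subseteq> {1..n}" by auto
  have nn: "n \<in> {1..n}" using n1 by simp
  have "poly h (x n) = 0" unfolding h_def poly_comb[OF sub nn] using n1 by simp
  moreover have "poly h0 (x n) = of_nat (M n) * poly (Pp n) (x n)"
    unfolding h0_def poly_comb[OF order.refl nn] using nn by simp
  moreover have "(of_nat (M n) :: 'p mod_ring) \<noteq> 0"
    using Mb[OF nn] of_nat_mod_ring_eq0_iff[of "M n"] by (auto dest: dvd_imp_le)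
  moreover have "poly (Pp n) (x n) \<noteq> 0" by (rule Pp_self[OF nn])
  ultimately have "c = 0" using c by simp
  then have "h = 0" using c by simp
  then have "poly h (x i) = 0" by simp
  moreover have "i \<in> {1..n}" using i by auto
  ultimately have "d i * poly (Pp i) (x i) = 0" unfolding h_def using poly_comb[OF sub] i by simp
  then show ?thesis using Pp_self \<open>i \<in> {1..n}\<close> by simp
qed

definition VV :: "(nat \<Rightarrow> 'p mod_ring) set" where "VV = PiE {1..n-1} (\<lambda>_. UNIV)"

lemma VV_ext: "VV = extensional {1..n-1}"
  unfolding VV_def by (auto simp: PiE_def)

lemma VV_eq: "c \<in> VV \<Longrightarrow> c' \<in> VV \<Longrightarrow> (\<And>i. i \<in> {1..n-1} \<Longrightarrow> c i = c' i) \<Longrightarrow> c = c'"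
  unfolding VV_ext by (rule extensionalityI)

lemma Tsurj:
  "\<exists>c. \<forall>l\<in>{1..n-1}. (\<Sum>i\<in>{1..n-1}. c i * coeff (Rr * Pp i) (l * CARD('p) - 1)) = y l"
proof -
  define f where "f c = restrict (\<lambda>l. \<Sum>i\<in>{1..n-1}. c i * coeff (Rr * Pp i) (l * CARD('p) - 1)) {1..n-1}" for c
  have fin: "finite VV" unfolding VV_def by (rule finite_PiE) auto
  have sub: "f ` VV \<subseteq> VV"
  proof (rule image_subsetI)
    fix c show "f c \<in> VV" unfolding f_def VV_def restrict_PiE_iff by simp
  qed
  have inj: "inj_on f VV"
  proof (rule inj_onI)
    fix c c' assume c: "c \<in> VV" and c': "c' \<in> VV" and e: "f c = f c'"
    have hz: "(\<Sum>i\<in>{1..n-1}. (c i - c' i) * coeff (Rr * Pp i) (l * CARD('p) - 1)) = 0"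
      if l: "l \<in> {1..n-1}" for l
    proof -
      have "f c l = f c' l" using e by simp
      then have "(\<Sum>i\<in>{1..n-1}. c i * coeff (Rr * Pp i) (l * CARD('p) - 1)) = 
                 (\<Sum>i\<in>{1..n-1}. c' i * coeff (Rr * Pp i) (l * CARD('p) - 1))"
        using l unfolding f_def by simp
      then show ?thesis by (simp add: left_diff_distrib sum_subtractf)
    qed
    show "c = c'"
    proof (rule VV_eq[OF c c'])
      fix i assume i: "i \<in> {1..n-1}"
      have "c i - c' i = 0" by (rule inj0[of "\<lambda>i. c i - c' i", OF hz i])
      then show "c i = c' i" by simp
    qed
  qed
  have im: "f ` VV = VV" by (rule endo_inj_surj[OF fin sub inj])
  have "restrict y {1..n-1} \<in> VV" unfolding VV_def restrict_PiE_iff by simp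
  then have "restrict y {1..n-1} \<in> f ` VV" unfolding im .
  then obtain c where fc: "f c = restrict y {1..n-1}" by (rule imageE) simp
  have "\<forall>l\<in>{1..n-1}. (\<Sum>i\<in>{1..n-1}. c i * coeff (Rr * Pp i) (l * CARD('p) - 1)) = y l"
  proof
    fix l assume l: "l \<in> {1..n-1}"
    have "f c l = y l" using fc l by simp
    then show "(\<Sum>i\<in>{1..n-1}. c i * coeff (Rr * Pp i) (l * CARD('p) - 1)) = y l"
      unfolding f_def using l by simp
  qed
  then show ?thesis by blast
qed

lemma Ainj:
  assumes hd: "\<And>i. i \<in> {1..n-1} \<Longrightarrow> (\<Sum>l\<in>{1..n-1}. d l * coeff (Rr * Pp i) (l * CARD('p) - 1)) = 0"
    and l0: "l0 \<in> {1..n-1}"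
  shows "d l0 = 0"
proof -
  obtain c where c: "\<forall>l\<in>{1..n-1}. (\<Sum>i\<in>{1..n-1}. c i * coeff (Rr * Pp i) (l * CARD('p) - 1)) = (if l = l0 then 1 else 0)"
    using Tsurj[of "\<lambda>l. if l = l0 then 1 else 0"] by blast
  have "d l0 = (\<Sum>l\<in>{1..n-1}. d l * (if l = l0 then 1 else 0))"
    using l0 by (simp add: sum.delta sum.delta' if_distrib[of "\<lambda>z. d _ * z"] cong: if_cong)
  also have "\<dots> = (\<Sum>l\<in>{1..n-1}. d l * (\<Sum>i\<in>{1..n-1}. c i * coeff (Rr * Pp i) (l * CARD('p) - 1)))"
    using c by (intro sum.cong) auto
  also have "\<dots> = (\<Sum>l\<in>{1..n-1}. \<Sum>i\<in>{1..n-1}. c i * (d l * coeff (Rr * Pp i) (l * CARD('p) - 1)))"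
    by (intro sum.cong refl) (simp add: sum_distrib_left mult.left_commute)
  also have "\<dots> = (\<Sum>i\<in>{1..n-1}. \<Sum>l\<in>{1..n-1}. c i * (d l * coeff (Rr * Pp i) (l * CARD('p) - 1)))"
    by (rule sum.swap)
  also have "\<dots> = (\<Sum>i\<in>{1..n-1}. c i * (\<Sum>l\<in>{1..n-1}. d l * coeff (Rr * Pp i) (l * CARD('p) - 1)))"
    by (simp add: sum_distrib_left)
  also have "\<dots> = 0" using hd by simp
  finally show ?thesis .
qed


lemma hyp_col:
  fixes m :: "nat \<Rightarrow> nat" and q :: nat
  assumes Mq: "\<And>i. i \<in> {1..n} \<Longrightarrow> (of_nat (M i) :: 'p mod_ring) = - of_nat (m i) * inverse (of_nat q)"
    and q0: "(of_nat q :: 'p mod_ring) \<noteq> 0"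
    and l: "1 \<le> l"
  shows "(\<Sum>i\<in>{1..n}. of_nat (m i) * coeff (Rr * Pp i) (l * CARD('p) - 1)) = 0"
proof -
  let ?k = "l * CARD('p) - 1"
  have mi: "(of_nat (m i) :: 'p mod_ring) = - of_nat q * of_nat (M i)" if "i \<in> {1..n}" for i
    using Mq[OF that] q0 by (simp add: field_simps)
  have "(\<Sum>i\<in>{1..n}. of_nat (m i) * coeff (Rr * Pp i) ?k) =
        (\<Sum>i\<in>{1..n}. - of_nat q * (of_nat (M i) * coeff (Rr * Pp i) ?k))"
    by (intro sum.cong refl) (simp add: mi)
  also have "\<dots> = - of_nat q * coeff (Rr * h0) ?k"
    unfolding h0_def coeff_comb by (simp add: sum_distrib_left)
  also have "coeff (Rr * h0) ?k = 0"
  proof -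
    have s: "Suc ?k = l * CARD('p)" using l by (simp add: Suc_diff_1)
    have "coeff (Rr * h0) ?k = of_nat (l * CARD('p)) * coeff (Phi n M x) (l * CARD('p))"
      unfolding pderiv_Phi[symmetric] coeff_pderiv s ..
    then show ?thesis by simp
  qed
  finally show ?thesis by simp
qed

lemma final:
  fixes m :: "nat \<Rightarrow> nat" and q :: nat and w :: "nat \<Rightarrow> 'p mod_ring"
  assumes Mq: "\<And>i. i \<in> {1..n} \<Longrightarrow> (of_nat (M i) :: 'p mod_ring) = - of_nat (m i) * inverse (of_nat q)"
    and q0: "(of_nat q :: 'p mod_ring) \<noteq> 0"
    and mn: "(of_nat (m n) :: 'p mod_ring) \<noteq> 0"
    and hw: "(\<Sum>i\<in>{1..n}. of_nat (m i) * w i) = 0"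
  shows "\<exists>!c. c \<in> extensional {1..n-1} \<and> (\<forall>i\<in>{1..n}. w i = (\<Sum>l\<in>{1..n-1}. c l * Ivec n M l x i))"
proof -
  define A where "A i l = coeff (Rr * Pp i) (l * CARD('p) - 1)" for i l
  define Av where "Av c i = (\<Sum>l\<in>{1..n-1}. c l * A i l)" for c i
  have IA: "Ivec n M l x i = A i l" if "i \<in> {1..n}" for i l
    unfolding A_def by (rule Ivec_eq[OF that])
  have H1: "(\<Sum>i\<in>{1..n}. of_nat (m i) * Av c i) = 0" for c
  proof -
    have "(\<Sum>i\<in>{1..n}. of_nat (m i) * Av c i) = (\<Sum>i\<in>{1..n}. \<Sum>l\<in>{1..n-1}. c l * (of_nat (m i) * A i l))"
      unfolding Av_def by (intro sum.cong refl) (simp add: sum_distrib_left mult.left_commute)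
    also have "\<dots> = (\<Sum>l\<in>{1..n-1}. \<Sum>i\<in>{1..n}. c l * (of_nat (m i) * A i l))"
      by (rule sum.swap)
    also have "\<dots> = (\<Sum>l\<in>{1..n-1}. c l * (\<Sum>i\<in>{1..n}. of_nat (m i) * A i l))"
      by (simp add: sum_distrib_left)
    also have "\<dots> = 0"
      unfolding A_def
    proof (intro sum.neutral ballI)
      fix l assume "l \<in> {1..n-1}"
      then have "1 \<le> l" by simp
      then show "c l * (\<Sum>i\<in>{1..n}. of_nat (m i) * coeff (Rr * Pp i) (l * CARD('p) - 1)) = 0"
        using hyp_col[OF Mq q0] by simp
    qed
    finally show ?thesis .
  qed
  have nS: "n = Suc (n - 1)" using n1 by simp
  have lastc: "u n = v n"
    if u: "(\<Sum>i\<in>{1..n}. of_nat (m i) * u i) = 0" and v: "(\<Sum>i\<in>{1..n}. of_nat (m i) * v i) = 0"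
      and uv: "\<And>i. i \<in> {1..n-1} \<Longrightarrow> u i = v i" for u v :: "nat \<Rightarrow> 'p mod_ring"
  proof -
    have split: "(\<Sum>i\<in>{1..n}. g i) = (\<Sum>i\<in>{1..n-1}. g i) + g n" for g :: "nat \<Rightarrow> 'p mod_ring"
      using n1 by (cases n) auto
    have "(\<Sum>i\<in>{1..n-1}. of_nat (m i) * u i) = (\<Sum>i\<in>{1..n-1}. of_nat (m i) * v i)"
      using uv by (intro sum.cong refl) simp
    then have "of_nat (m n) * u n = of_nat (m n) * v n"
      using u v unfolding split by (metis add_left_cancel)
    then show ?thesis using mn by simp
  qed
  have core: "c = c'" if c: "c \<in> VV" and c': "c' \<in> VV" and e: "\<And>i. i \<in> {1..n-1} \<Longrightarrow> Av c i = Av c' i" for c c'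
  proof (rule VV_eq[OF c c'])
    fix l assume l: "l \<in> {1..n-1}"
    have "(\<Sum>l\<in>{1..n-1}. (c l - c' l) * coeff (Rr * Pp i) (l * CARD('p) - 1)) = 0"
      if i: "i \<in> {1..n-1}" for i
    proof -
      have "Av c i = Av c' i" by (rule e[OF i])
      then show ?thesis unfolding Av_def A_def by (simp add: left_diff_distrib sum_subtractf)
    qed
    then have "c l - c' l = 0" by (rule Ainj[of "\<lambda>l. c l - c' l", OF _ l])
    then show "c l = c' l" by simp
  qed
  define f where "f c = restrict (Av c) {1..n-1}" for c
  have fin: "finite VV" unfolding VV_def by (rule finite_PiE) auto
  have sub: "f ` VV \<subseteq> VV"
  proof (rule image_subsetI)
    fix c show "f c \<in> VV" unfolding f_def VV_def restrict_PiE_iff by simp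
  qed
  have inj: "inj_on f VV"
  proof (rule inj_onI)
    fix c c' assume c: "c \<in> VV" and c': "c' \<in> VV" and e: "f c = f c'"
    show "c = c'"
    proof (rule core[OF c c'])
      fix i assume i: "i \<in> {1..n-1}"
      have "f c i = f c' i" using e by simp
      then show "Av c i = Av c' i" unfolding f_def using i by simp
    qed
  qed
  have im: "f ` VV = VV" by (rule endo_inj_surj[OF fin sub inj])
  have "restrict w {1..n-1} \<in> VV" unfolding VV_def restrict_PiE_iff by simp
  then have "restrict w {1..n-1} \<in> f ` VV" unfolding im .
  then obtain c where cV: "c \<in> VV" and fc: "f c = restrict w {1..n-1}" by (rule imageE) simp
  have wc1: "Av c i = w i" if i: "i \<in> {1..n-1}" for i
  proof -
    have "f c i = restrict w {1..n-1} i" using fc by simp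
    then show ?thesis unfolding f_def using i by simp
  qed
  have wc: "w i = Av c i" if i: "i \<in> {1..n}" for i
  proof (cases "i = n")
    case True
    have "Av c n = w n" by (rule lastc[OF H1 hw wc1])
    then show ?thesis using True by simp
  next
    case False
    then have "i \<in> {1..n-1}" using i by auto
    then show ?thesis using wc1 by simp
  qed
  show ?thesis
  proof (rule ex1I[of _ c])
    show "c \<in> extensional {1..n-1} \<and> (\<forall>i\<in>{1..n}. w i = (\<Sum>l\<in>{1..n-1}. c l * Ivec n M l x i))"
      using cV wc IA unfolding VV_ext Av_def by simp
  next
    fix c' assume h: "c' \<in> extensional {1..n-1} \<and> (\<forall>i\<in>{1..n}. w i = (\<Sum>l\<in>{1..n-1}. c' l * Ivec n M l x i))"
    then have c'V: "c' \<in> VV" unfolding VV_ext by simp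
    show "c' = c"
    proof (rule core[OF c'V cV])
      fix i assume i: "i \<in> {1..n-1}"
      then have i': "i \<in> {1..n}" by auto
      have "w i = Av c' i" using h i' IA[OF i'] unfolding Av_def by simp
      then show "Av c' i = Av c i" using wc[OF i'] by simp
    qed
  qed
qed

end

lemma bigM_props:
  assumes "(of_nat mi :: 'p::prime_card mod_ring) \<noteq> 0" "(of_nat q :: 'p mod_ring) \<noteq> 0"
  shows "0 < bigM TYPE('p) q mi \<and> bigM TYPE('p) q mi < CARD('p) \<and>
         (of_nat (bigM TYPE('p) q mi) :: 'p mod_ring) = - of_nat mi * inverse (of_nat q)"
proof -
  define v :: "'p mod_ring" where "v = - of_nat mi * inverse (of_nat q)"
  have v0: "v \<noteq> 0" unfolding v_def using assms by simp
  obtain i where i: "i < CARD('p)" "v = of_nat i" using surj_of_nat_mod_ring[of v] by blast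
  have i0: "0 < i" using i v0 by (cases i) auto
  let ?P = "\<lambda>M::nat. 0 < M \<and> (of_nat M :: 'p mod_ring) = v"
  have Pi: "?P i" using i i0 by simp
  have "?P (LEAST M. ?P M)" by (rule LeastI[of ?P, OF Pi])
  moreover have "(LEAST M. ?P M) \<le> i" by (rule Least_le[of ?P, OF Pi])
  ultimately show ?thesis unfolding bigM_def v_def[symmetric] using i by simp
qed

theorem corollary7p7:
  fixes q n :: nat and m :: "nat \<Rightarrow> nat"
  defines "p \<equiv> CARD('p::prime_card)"
  defines "M \<equiv> (\<lambda>i. bigM TYPE('p) q (m i))"
  assumes "prime q" and "2 \<le> n" and "n < p" and "q < p"
    and "\<And>i. i \<in> {1..n} \<Longrightarrow> 0 < m i \<and> m i < q"
    and ample: "(\<Sum>i\<in>{1..n}. M i) div p = n - 1"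
  shows "\<forall>(x :: nat \<Rightarrow> 'p mod_ring) (w :: nat \<Rightarrow> 'p mod_ring).
           inj_on x {1..n} \<longrightarrow> (\<Sum>i\<in>{1..n}. of_nat (m i) * w i) = 0 \<longrightarrow>
           (\<exists>!c. c \<in> extensional {1..n-1} \<and>
              (\<forall>i\<in>{1..n}. w i = (\<Sum>l\<in>{1..n-1}. c l * Ivec n M l x i)))"
proof (intro allI impI)
  fix x :: "nat \<Rightarrow> 'p mod_ring" and w :: "nat \<Rightarrow> 'p mod_ring"
  assume inj: "inj_on x {1..n}" and hw: "(\<Sum>i\<in>{1..n}. of_nat (m i) * w i) = 0"
  have qp: "q < CARD('p)" using assms(6) unfolding p_def .
  have q1: "0 < q" using assms(3) prime_gt_0_nat by blast
  have q0: "(of_nat q :: 'p mod_ring) \<noteq> 0"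
    using of_nat_mod_ring_eq0_iff[of q] qp q1 by (auto dest: dvd_imp_le)
  have m0: "(of_nat (m i) :: 'p mod_ring) \<noteq> 0" if i: "i \<in> {1..n}" for i
    using of_nat_mod_ring_eq0_iff[of "m i"] assms(7)[OF i] qp by (auto dest: dvd_imp_le)
  have MP: "0 < M i \<and> M i < CARD('p) \<and> (of_nat (M i) :: 'p mod_ring) = - of_nat (m i) * inverse (of_nat q)"
    if i: "i \<in> {1..n}" for i
    unfolding M_def using bigM_props[OF m0[OF i] q0] by simp
  have Mb: "\<And>i. i \<in> {1..n} \<Longrightarrow> 0 < M i \<and> M i < CARD('p)" using MP by blast
  have Mq: "\<And>i. i \<in> {1..n} \<Longrightarrow> (of_nat (M i) :: 'p mod_ring) = - of_nat (m i) * inverse (of_nat q)"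
    using MP by blast
  have amp: "(\<Sum>i\<in>{1..n}. M i) div CARD('p) = n - 1" using ample unfolding p_def .
  have n1: "1 \<le> n" using assms(4) by simp
  have mn: "(of_nat (m n) :: 'p mod_ring) \<noteq> 0" using m0 n1 by simp
  show "\<exists>!c. c \<in> extensional {1..n-1} \<and> (\<forall>i\<in>{1..n}. w i = (\<Sum>l\<in>{1..n-1}. c l * Ivec n M l x i))"
    by (rule final[OF inj Mb amp n1 Mq q0 mn hw])
qed

end
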